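(* Let $G$ be a graph with at most one isolated vertex and no connected component consisting of a single edge, and let $s=s(G)$ be its irregularity strength. Then $G$ contains a spanning subgraph $H$ with $m(H)\le 2s$. If moreover $G$ is regular, then $G$ contains a spanning subgraph $H$ with $m(H)\le 2s-2$.
   Context: All graphs are finite and simple. For a graph $G$ and integer $k\ge0$, $m(G,k)$ is the number of vertices of degree exactly $k$ in $G$ and $m(G)=\max_k m(G,k)$. For a graph $G=(V,E)$ with at most one isolated vertex and no isolated edges (components isomorphic to $K_2$), the irregularity strength $s(G)$ is the smallest positive integer $s$ such that there is a function $w:E\to\{1,2,\dots,s\}$ for which the sums $\sum_{e\ni v}w(e)$, $v\in V$, are pairwise distinct. *)

theory Defs
  imports Main
begin

definition simple_graph :: "'a set \<Rightarrow> 'a set set \<Rightarrow> bool" where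
  "simple_graph V E \<longleftrightarrow> finite V \<and>
     (\<forall>e\<in>E. \<exists>u v. u \<in> V \<and> v \<in> V \<and> u \<noteq> v \<and> e = {u, v})"

definition degree :: "'a set set \<Rightarrow> 'a \<Rightarrow> nat" where
  "degree E v = card {e \<in> E. v \<in> e}"

definition mult_deg :: "'a set \<Rightarrow> 'a set set \<Rightarrow> nat \<Rightarrow> nat" where
  "mult_deg V E k = card {v \<in> V. degree E v = k}"

definition max_mult :: "'a set \<Rightarrow> 'a set set \<Rightarrow> nat" where
  "max_mult V E = Max (range (mult_deg V E))"

definition isolated_vertex :: "'a set \<Rightarrow> 'a set set \<Rightarrow> 'a \<Rightarrow> bool" where
  "isolated_vertex V E v \<longleftrightarrow> v \<in> V \<and> degree E v = 0"

text \<open>An isolated edge: a component isomorphic to K2, i.e. an edge both of whose ends have degree 1.\<close>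
definition has_isolated_edge :: "'a set set \<Rightarrow> bool" where
  "has_isolated_edge E \<longleftrightarrow>
     (\<exists>u v. {u, v} \<in> E \<and> u \<noteq> v \<and> degree E u = 1 \<and> degree E v = 1)"

definition regular :: "'a set \<Rightarrow> 'a set set \<Rightarrow> bool" where
  "regular V E \<longleftrightarrow> (\<exists>d. \<forall>v\<in>V. degree E v = d)"

definition irregular_weighting :: "'a set \<Rightarrow> 'a set set \<Rightarrow> nat \<Rightarrow> ('a set \<Rightarrow> nat) \<Rightarrow> bool" where
  "irregular_weighting V E s w \<longleftrightarrow>
     (\<forall>e\<in>E. w e \<in> {1..s}) \<and> inj_on (\<lambda>v. \<Sum>e\<in>{e \<in> E. v \<in> e}. w e) V"

definition irreg_strength :: "'a set \<Rightarrow> 'a set set \<Rightarrow> nat" where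
  "irreg_strength V E = (LEAST s. 1 \<le> s \<and> (\<exists>w. irregular_weighting V E s w))"

end

theory Submission
  imports Defs Complex_Main "HOL-Library.Nat_Bijection"
begin


definition ysum :: "'a set set \<Rightarrow> ('a set \<Rightarrow> real) \<Rightarrow> 'a \<Rightarrow> real" where
  "ysum E y x = (\<Sum>e\<in>{e\<in>E. x \<in> e}. y e)"

definition bad :: "('a \<Rightarrow> int) \<Rightarrow> 'a \<Rightarrow> int \<Rightarrow> int" where
  "bad L x d = max 0 (L x - d) + max 0 (d - L x - 1)"

definition flip :: "'a set set \<Rightarrow> 'a set \<Rightarrow> 'a set set" where
  "flip G e = (if e \<in> G then G - {e} else insert e G)"

lemma degree_flip:
  assumes "finite G"
  shows "int (degree (flip G e) x) =
     int (degree G x) + (if x \<in> e then (if e \<in> G then -1 else 1) else 0)"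
proof (cases "e \<in> G")
  case True
  have fin: "finite {e' \<in> G. x \<in> e'}" using assms by auto
  have eq: "{e' \<in> flip G e. x \<in> e'} = {e' \<in> G. x \<in> e'} - {e}" using True by (auto simp: flip_def)
  show ?thesis
  proof (cases "x \<in> e")
    case True
    then have "e \<in> {e' \<in> G. x \<in> e'}" using \<open>e \<in> G\<close> by simp
    then have "card ({e' \<in> G. x \<in> e'} - {e}) = card {e' \<in> G. x \<in> e'} - 1"
      using fin by (simp add: card_Diff_singleton)
    moreover have "card {e' \<in> G. x \<in> e'} \<ge> 1" using fin \<open>e \<in> {e' \<in> G. x \<in> e'}\<close>
      by (metis One_nat_def Suc_leI card_gt_0_iff empty_iff)
    ultimately show ?thesis using True \<open>e \<in> G\<close> unfolding degree_def eq by simp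
  next
    case False
    then have "{e' \<in> G. x \<in> e'} - {e} = {e' \<in> G. x \<in> e'}" by auto
    then show ?thesis using False unfolding degree_def eq by simp
  qed
next
  case False
  have fin: "finite {e' \<in> G. x \<in> e'}" using assms by auto
  show ?thesis
  proof (cases "x \<in> e")
    case True
    have eq: "{e' \<in> flip G e. x \<in> e'} = insert e {e' \<in> G. x \<in> e'}" using False True by (auto simp: flip_def)
    have "e \<notin> {e' \<in> G. x \<in> e'}" using False by simp
    then show ?thesis using fin True False unfolding degree_def eq by simp
  next
    case F2: False
    have eq: "{e' \<in> flip G e. x \<in> e'} = {e' \<in> G. x \<in> e'}" using False F2 by (auto simp: flip_def)
    show ?thesis using F2 unfolding degree_def eq by simp
  qed
qed

lemma degree_diff:
  assumes "finite E" "F \<subseteq> E"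
  shows "degree (E - F) x = degree E x - degree F x" "degree F x \<le> degree E x"
proof -
  have a: "{e \<in> E - F. x \<in> e} = {e \<in> E. x \<in> e} - {e \<in> F. x \<in> e}" by auto
  have b: "{e \<in> F. x \<in> e} \<subseteq> {e \<in> E. x \<in> e}" using assms by auto
  have c: "finite {e \<in> E. x \<in> e}" using assms by auto
  show "degree (E - F) x = degree E x - degree F x"
    unfolding degree_def a using b c by (simp add: card_Diff_subset finite_subset)
  show "degree F x \<le> degree E x" unfolding degree_def using b c by (simp add: card_mono)
qed

lemma degree_as_sum:
  assumes "finite E" "F \<subseteq> E"
  shows "real (degree F x) = (\<Sum>e\<in>{e\<in>E. x \<in> e}. if e \<in> F then 1 else 0)"
proof -
  have "(\<Sum>e\<in>{e\<in>E. x \<in> e}. if e \<in> F then 1 else (0::real)) = real (card ({e\<in>E. x \<in> e} \<inter> {e. e \<in> F}))"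
    using assms by (simp add: sum.If_cases)
  also have "{e\<in>E. x \<in> e} \<inter> {e. e \<in> F} = {e\<in>F. x\<in>e}" using assms by auto
  finally show ?thesis by (simp add: degree_def)
qed

lemma degree_E_sum:
  assumes "finite E"
  shows "real (degree E x) = (\<Sum>e\<in>{e\<in>E. x \<in> e}. 1)"
  using assms by (simp add: degree_def)



locale aug =
  fixes E :: "'a set set" and F :: "'a set set" and y :: "'a set \<Rightarrow> real"
    and L :: "'a \<Rightarrow> int" and v0 :: 'a
  assumes finE: "finite E"
    and edges: "\<forall>e\<in>E. \<exists>a b. a \<noteq> b \<and> e = {a, b}"
    and FE: "F \<subseteq> E"
    and y01: "\<forall>e\<in>E. 0 \<le> y e \<and> y e \<le> 1"
    and Lb: "\<forall>x. real_of_int (L x) \<le> ysum E y x \<and> ysum E y x \<le> real_of_int (L x) + 1"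
    and exc: "L v0 + 2 \<le> int (degree F v0)"
begin

definition trm :: "'a \<times> bool \<Rightarrow> bool" where
  "trm t = (if snd t then fst t = v0 \<or> L (fst t) + 1 \<le> int (degree F (fst t))
            else fst t \<noteq> v0 \<and> int (degree F (fst t)) \<le> L (fst t))"

definition stp :: "'a \<times> bool \<Rightarrow> 'a \<times> bool \<Rightarrow> 'a set \<Rightarrow> bool" where
  "stp s t e = (e \<in> E \<and> e = {fst s, fst t} \<and> fst s \<noteq> fst t \<and> snd t = (\<not> snd s) \<and>
      (if snd s then e \<notin> F \<and> 0 < y e else e \<in> F \<and> y e < 1))"

definition delta :: "'a \<Rightarrow> bool \<Rightarrow> 'a \<Rightarrow> int" where
  "delta u p x = (if x = v0 then -1 else 0) + (if x = u then (if p then -1 else 1) else 0)"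

inductive PR :: "'a \<times> bool \<Rightarrow> 'a set set \<Rightarrow> 'a set \<Rightarrow> bool" where
  init: "PR (v0, False) F {v0}"
| step: "PR s G S \<Longrightarrow> \<not> trm s \<Longrightarrow> stp s t e \<Longrightarrow> fst t \<notin> S \<Longrightarrow> PR t (flip G e) (insert (fst t) S)"

definition inv :: "'a \<times> bool \<Rightarrow> 'a set set \<Rightarrow> 'a set \<Rightarrow> bool" where
  "inv s G S = (G \<subseteq> E \<and> (\<forall>x. int (degree G x) = int (degree F x) + delta (fst s) (snd s) x)
     \<and> (\<forall>e\<in>E. (e \<in> G) \<noteq> (e \<in> F) \<longrightarrow> e \<subseteq> S)
     \<and> (\<forall>e\<in>E. (e \<in> G) \<noteq> (e \<in> F) \<and> fst s \<in> e \<longrightarrow> (e \<in> F) = snd s)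
     \<and> fst s \<in> S)"

lemma finG: "G \<subseteq> E \<Longrightarrow> finite G" using finE finite_subset by blast

lemma step_deg:
  assumes "inv s G S" "stp s t e"
  shows "flip G e \<subseteq> E \<and> (\<forall>x. int (degree (flip G e) x) = int (degree F x) + delta (fst t) (snd t) x)
    \<and> ((e \<in> G) = (e \<in> F))"
proof -
  obtain u p where s: "s = (u,p)" by (cases s)
  obtain w q where t: "t = (w,q)" by (cases t)
  from assms have GE: "G \<subseteq> E" and dG: "\<forall>x. int (degree G x) = int (degree F x) + delta u p x"
    and I4: "\<forall>e\<in>E. (e \<in> G) \<noteq> (e \<in> F) \<and> u \<in> e \<longrightarrow> (e \<in> F) = p"
    by (auto simp: inv_def s)
  from assms(2) have eE: "e \<in> E" and e: "e = {u,w}" and uw: "u \<noteq> w" and q: "q = (\<not> p)"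
    and ty: "if p then e \<notin> F \<and> 0 < y e else e \<in> F \<and> y e < 1"
    by (auto simp: stp_def s t)
  have eG: "(e \<in> G) = (e \<in> F)"
  proof (rule ccontr)
    assume "(e \<in> G) \<noteq> (e \<in> F)"
    with I4 eE e have "(e \<in> F) = p" by auto
    with ty show False by (auto split: if_splits)
  qed
  have "flip G e \<subseteq> E" using GE eE by (auto simp: flip_def)
  moreover have "\<forall>x. int (degree (flip G e) x) = int (degree F x) + delta w q x"
  proof
    fix x
    have "int (degree (flip G e) x) = int (degree G x) + (if x \<in> e then (if e \<in> G then -1 else 1) else 0)"
      by (rule degree_flip[OF finG[OF GE]])
    moreover have "(x \<in> e) = (x = u \<or> x = w)" using e by auto
    moreover note dx = dG[rule_format, of x]
    ultimately show "int (degree (flip G e) x) = int (degree F x) + delta w q x"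
    proof (cases p)
      case True
      then have "e \<notin> G" using ty eG by simp
      then show ?thesis using \<open>int (degree (flip G e) x) = _\<close> \<open>(x \<in> e) = _\<close> dx True q uw
        unfolding delta_def by (cases "x = u"; cases "x = w"; cases "x = v0") simp_all
    next
      case False
      then have "e \<in> G" using ty eG by simp
      then show ?thesis using \<open>int (degree (flip G e) x) = _\<close> \<open>(x \<in> e) = _\<close> dx False q uw
        unfolding delta_def by (cases "x = u"; cases "x = w"; cases "x = v0") simp_all
    qed
  qed
  ultimately show ?thesis using eG t by auto
qed

lemma PR_inv: "PR s G S \<Longrightarrow> inv s G S"
proof (induction rule: PR.induct)
  case init
  show ?case using FE by (auto simp: inv_def delta_def)
next
  case (step s G S t e)
  obtain u p where s: "s = (u,p)" by (cases s)
  obtain w q where t: "t = (w,q)" by (cases t)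
  from step_deg[OF step.IH step.hyps(3)] have A: "flip G e \<subseteq> E"
    and B: "\<forall>x. int (degree (flip G e) x) = int (degree F x) + delta (fst t) (snd t) x"
    and C: "(e \<in> G) = (e \<in> F)" by auto
  from step.IH have I3: "\<forall>e\<in>E. (e \<in> G) \<noteq> (e \<in> F) \<longrightarrow> e \<subseteq> S" and uS: "u \<in> S"
    by (auto simp: inv_def s)
  from step.hyps(3) have eE: "e \<in> E" and e: "e = {u,w}" and q: "q = (\<not> p)"
    and ty: "if p then e \<notin> F \<and> 0 < y e else e \<in> F \<and> y e < 1"
    by (auto simp: stp_def s t)
  have wS: "w \<notin> S" using step.hyps(4) t by simp
  have fl: "(e' \<in> flip G e) \<noteq> (e' \<in> F) \<longleftrightarrow> (e' = e \<or> ((e' \<in> G) \<noteq> (e' \<in> F)))" for e'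
    using C by (cases "e \<in> G") (auto simp: flip_def)
  have I3': "\<forall>e'\<in>E. (e' \<in> flip G e) \<noteq> (e' \<in> F) \<longrightarrow> e' \<subseteq> insert w S"
  proof (intro ballI impI)
    fix e' assume e'E: "e' \<in> E" and fe: "(e' \<in> flip G e) \<noteq> (e' \<in> F)"
    show "e' \<subseteq> insert w S"
    proof (cases "e' = e")
      case True then show ?thesis using e uS by auto
    next
      case False
      then have "(e' \<in> G) \<noteq> (e' \<in> F)" using fl[of e'] fe by simp
      then have "e' \<subseteq> S" using I3 e'E by simp
      then show ?thesis by auto
    qed
  qed
  have I4': "\<forall>e'\<in>E. (e' \<in> flip G e) \<noteq> (e' \<in> F) \<and> w \<in> e' \<longrightarrow> (e' \<in> F) = q"
  proof (intro ballI impI)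
    fix e' assume e'E: "e' \<in> E" and fe: "(e' \<in> flip G e) \<noteq> (e' \<in> F) \<and> w \<in> e'"
    have "e' = e"
    proof (rule ccontr)
      assume "e' \<noteq> e"
      then have "(e' \<in> G) \<noteq> (e' \<in> F)" using fl[of e'] fe by simp
      then have "e' \<subseteq> S" using I3 e'E by simp
      then show False using fe wS by auto
    qed
    then show "(e' \<in> F) = q" using ty q by (cases p) auto
  qed
  have wI: "w \<in> insert w S" by simp
  show ?case unfolding inv_def t fst_conv snd_conv
    using A B I3' I4' wI t by simp
qed

end


context aug begin

lemma bad_dec1: "L x + 1 \<le> d \<Longrightarrow> bad L x (d - 1) \<le> bad L x d"
  by (simp add: bad_def max_def)
lemma bad_inc1: "d \<le> L x \<Longrightarrow> bad L x (d + 1) \<le> bad L x d"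
  by (simp add: bad_def max_def)
lemma bad_v0: "L x + 2 \<le> d \<Longrightarrow> 1 \<le> k \<Longrightarrow> k \<le> 2 \<Longrightarrow> bad L x (d - k) < bad L x d"
  by (simp add: bad_def max_def)

lemma improve:
  assumes "\<forall>x. int (degree G x) = int (degree F x) + delta z q x" "trm (z,q)"
  shows "(\<forall>x. bad L x (int (degree G x)) \<le> bad L x (int (degree F x)))
    \<and> bad L v0 (int (degree G v0)) < bad L v0 (int (degree F v0))"
proof -
  have B: "bad L v0 (int (degree G v0)) < bad L v0 (int (degree F v0))"
  proof (cases "z = v0")
    case True
    then have "q" using assms(2) by (auto simp: trm_def split: if_splits)
    then have "int (degree G v0) = int (degree F v0) - 2" using assms(1)[rule_format, of v0] True
      by (simp add: delta_def)
    then show ?thesis using bad_v0[OF exc, of 2] by simp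
  next
    case False
    then have "int (degree G v0) = int (degree F v0) - 1" using assms(1)[rule_format, of v0]
      by (simp add: delta_def)
    then show ?thesis using bad_v0[OF exc, of 1] by simp
  qed
  have A: "bad L x (int (degree G x)) \<le> bad L x (int (degree F x))" for x
  proof (cases "x = v0")
    case True then show ?thesis using B by simp
  next
    case False
    show ?thesis
    proof (cases "x = z")
      case True
      show ?thesis
      proof (cases q)
        case True
        then have "L x + 1 \<le> int (degree F x)" using assms(2) \<open>x = z\<close> \<open>x \<noteq> v0\<close> by (auto simp: trm_def)
        moreover have "int (degree G x) = int (degree F x) - 1" using assms(1)[rule_format, of x] True \<open>x = z\<close> \<open>x \<noteq> v0\<close>
          by (simp add: delta_def)
        ultimately show ?thesis using bad_dec1 by simp
      next
        case False
        then have "int (degree F x) \<le> L x" using assms(2) \<open>x = z\<close> by (auto simp: trm_def)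
        moreover have "int (degree G x) = int (degree F x) + 1" using assms(1)[rule_format, of x] False \<open>x = z\<close> \<open>x \<noteq> v0\<close>
          by (simp add: delta_def)
        ultimately show ?thesis using bad_inc1 by simp
      qed
    next
      case False
      then have "int (degree G x) = int (degree F x)" using assms(1)[rule_format, of x] \<open>x \<noteq> v0\<close>
        by (simp add: delta_def)
      then show ?thesis by simp
    qed
  qed
  show ?thesis using A B by blast
qed

lemma both_nt: "\<not> trm (x,True) \<Longrightarrow> \<not> trm (x,False) \<Longrightarrow> False"
  by (auto simp: trm_def)

lemma card_pair_filter:
  assumes "a \<noteq> b"
  shows "real (card {x\<in>A. x \<in> {a,b}}) = (if a \<in> A then 1 else 0) + (if b \<in> A then 1 else 0)"
proof -
  have "{x\<in>A. x \<in> {a,b}} = (if a \<in> A then {a} else {}) \<union> (if b \<in> A then {b} else {})" by auto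
  then show ?thesis using assms by (auto simp: card_insert_if)
qed

lemma sum_swap_ex:
  assumes "finite A"
  shows "(\<Sum>x\<in>A. \<Sum>e\<in>E. if x \<in> e then r e else 0) = (\<Sum>e\<in>E. r e * real (card {x\<in>A. x \<in> e}))"
proof -
  have "(\<Sum>x\<in>A. \<Sum>e\<in>E. if x \<in> e then r e else 0) = (\<Sum>e\<in>E. \<Sum>x\<in>A. if x \<in> e then r e else (0::real))"
    by (rule sum.swap)
  also have "\<dots> = (\<Sum>e\<in>E. r e * real (card {x\<in>A. x \<in> e}))"
  proof (rule sum.cong[OF refl])
    fix e
    have "(\<Sum>x\<in>A. if x \<in> e then r e else (0::real)) = (\<Sum>x\<in>A \<inter> {x. x \<in> e}. r e)"
      using assms by (simp add: sum.If_cases)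
    also have "A \<inter> {x. x \<in> e} = {x\<in>A. x \<in> e}" by auto
    finally show "(\<Sum>x\<in>A. if x \<in> e then r e else (0::real)) = r e * real (card {x\<in>A. x \<in> e})"
      by simp
  qed
  finally show ?thesis .
qed

lemma excess:
  "\<exists>G\<subseteq>E. (\<forall>x. bad L x (int (degree G x)) \<le> bad L x (int (degree F x)))
    \<and> bad L v0 (int (degree G v0)) < bad L v0 (int (degree F v0))"
proof (rule ccontr)
  assume H: "\<not> ?thesis"
  define R where "R = {t. \<exists>G S. PR t G S}"
  have nt: "\<not> trm t" if "t \<in> R" for t
  proof
    assume tt: "trm t"
    obtain z q where t: "t = (z,q)" by (cases t)
    from that obtain G S where "PR t G S" by (auto simp: R_def)
    then have "inv t G S" by (rule PR_inv)
    then have "G \<subseteq> E" "\<forall>x. int (degree G x) = int (degree F x) + delta z q x"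
      by (auto simp: inv_def t)
    then have "\<exists>G'\<subseteq>E. (\<forall>x. bad L x (int (degree G' x)) \<le> bad L x (int (degree F x)))
      \<and> bad L v0 (int (degree G' v0)) < bad L v0 (int (degree F v0))"
      using improve[of G z q] tt t by blast
    then show False using H by blast
  qed
  have vis: "PR t G S \<Longrightarrow> \<forall>x\<in>S. \<exists>q. (x,q) \<in> R" for t G S
  proof (induction rule: PR.induct)
    case init then show ?case by (auto simp: R_def intro: PR.init)
  next
    case (step s G S t e)
    have "t \<in> R" using PR.step[OF step.hyps] by (auto simp: R_def)
    then show ?case using step.IH by (cases t) auto
  qed
  have clo: "t \<in> R" if sR: "s \<in> R" and st: "stp s t e" for s t e
  proof -
    obtain w q where t: "t = (w,q)" by (cases t)
    from sR obtain G S where P: "PR s G S" by (auto simp: R_def)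
    have iv: "inv s G S" using P by (rule PR_inv)
    from step_deg[OF iv st] have "flip G e \<subseteq> E"
      "\<forall>x. int (degree (flip G e) x) = int (degree F x) + delta w q x" by (auto simp: t)
    note fl = this
    have ntt: "\<not> trm (w,q)"
    proof
      assume "trm (w,q)"
      then have "\<exists>G'\<subseteq>E. (\<forall>x. bad L x (int (degree G' x)) \<le> bad L x (int (degree F x)))
        \<and> bad L v0 (int (degree G' v0)) < bad L v0 (int (degree F v0))"
        using improve[of "flip G e" w q] fl by blast
      then show False using H by blast
    qed
    show ?thesis
    proof (cases "w \<in> S")
      case False
      then show ?thesis using PR.step[OF P nt[OF sR] st] t by (auto simp: R_def)
    next
      case True
      with vis[OF P] obtain q' where q': "(w,q') \<in> R" by auto
      show ?thesis
      proof (cases "q' = q")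
        case True then show ?thesis using q' t by simp
      next
        case False
        have "\<not> trm (w,q')" using nt[OF q'] .
        with ntt False both_nt[of w] show ?thesis by (cases q; cases q') auto
      qed
    qed
  qed
  define VV where "VV = \<Union>E"
  have "\<forall>e\<in>E. finite e" using edges by fastforce
  then have finVV: "finite VV" unfolding VV_def using finE by blast
  define A0 where "A0 = {x\<in>VV. (x,False) \<in> R}"
  define A1 where "A1 = {x\<in>VV. (x,True) \<in> R}"
  have finA: "finite A0" "finite A1" using finVV by (auto simp: A0_def A1_def)
  define r where "r e = (if e \<in> F then 1 else 0) - y e" for e
  define ex where "ex x = (\<Sum>e\<in>E. if x \<in> e then r e else 0)" for x
  have ex_eq: "ex x = real (degree F x) - ysum E y x" for x
  proof -
    have "ex x = (\<Sum>e\<in>{e\<in>E. x \<in> e}. r e)" unfolding ex_def using finE by (simp add: sum.inter_filter)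
    also have "\<dots> = (\<Sum>e\<in>{e\<in>E. x \<in> e}. if e \<in> F then 1 else 0) - ysum E y x"
      unfolding r_def ysum_def by (simp add: sum_subtractf)
    finally show ?thesis using degree_as_sum[OF finE FE, of x] by simp
  qed
  have v0R: "(v0, False) \<in> R" by (auto simp: R_def intro: PR.init)
  have ysnn: "0 \<le> ysum E y x" for x unfolding ysum_def using y01 by (auto intro: sum_nonneg)
  have "L v0 \<ge> -1" using Lb[rule_format, of v0] ysnn[of v0] by linarith
  then have "degree F v0 > 0" using exc by linarith
  then obtain e0 where "e0 \<in> F" "v0 \<in> e0" unfolding degree_def
    by (metis (mono_tags, lifting) card.empty empty_Collect_eq less_irrefl)
  then have v0VV: "v0 \<in> VV" using FE unfolding VV_def by auto
  have disj: "x \<in> A0 \<Longrightarrow> x \<in> A1 \<Longrightarrow> False" for x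
    using nt both_nt unfolding A0_def A1_def by blast
  have A0pos: "ex x \<ge> 0" if "x \<in> A0" "x \<noteq> v0" for x
  proof -
    have "\<not> trm (x,False)" using nt that unfolding A0_def by auto
    then have "L x + 1 \<le> int (degree F x)" using that by (auto simp: trm_def)
    then show ?thesis using ex_eq[of x] Lb[rule_format, of x] by linarith
  qed
  have v0pos: "ex v0 \<ge> 1" using ex_eq[of v0] Lb[rule_format, of v0] exc by linarith
  have A1neg: "ex x \<le> 0" if "x \<in> A1" for x
  proof -
    have "\<not> trm (x,True)" using nt that unfolding A1_def by auto
    then have "int (degree F x) \<le> L x" by (auto simp: trm_def)
    then show ?thesis using ex_eq[of x] Lb[rule_format, of x] by linarith
  qed
  have v0A0: "v0 \<in> A0" using v0VV v0R by (auto simp: A0_def)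
  have "(\<Sum>x\<in>A0. ex x) = ex v0 + (\<Sum>x\<in>A0 - {v0}. ex x)"
    using finA(1) v0A0 by (simp add: sum.remove)
  moreover have "(\<Sum>x\<in>A0 - {v0}. ex x) \<ge> 0" using A0pos by (auto intro: sum_nonneg)
  ultimately have S0: "(\<Sum>x\<in>A0. ex x) \<ge> 1" using v0pos by linarith
  have S1: "(\<Sum>x\<in>A1. ex x) \<le> 0" using A1neg by (auto intro: sum_nonpos)
  have edge: "r e * real (card {x\<in>A0. x \<in> e}) \<le> r e * real (card {x\<in>A1. x \<in> e})" if eE: "e \<in> E" for e
  proof -
    obtain a b where ab: "a \<noteq> b" "e = {a,b}" using edges eE by blast
    have abV: "a \<in> VV" "b \<in> VV" using eE ab unfolding VV_def by auto
    have c0: "real (card {x\<in>A0. x \<in> e}) = (if a \<in> A0 then 1 else 0) + (if b \<in> A0 then 1 else 0)"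
      using card_pair_filter[OF ab(1)] ab(2) by simp
    have c1: "real (card {x\<in>A1. x \<in> e}) = (if a \<in> A1 then 1 else 0) + (if b \<in> A1 then 1 else 0)"
      using card_pair_filter[OF ab(1)] ab(2) by simp
    have eba: "e = {b,a}" using ab by auto
    consider "r e > 0" | "r e < 0" | "r e = 0" by linarith
    then show ?thesis
    proof cases
      case 1
      then have ty: "e \<in> F" "y e < 1" using y01 eE unfolding r_def by (auto split: if_splits)
      have s1: "stp (a,False) (b,True) e" using ty eE ab by (auto simp: stp_def)
      have s2: "stp (b,False) (a,True) e" using ty eE ab eba by (auto simp: stp_def)
      have i1: "a \<in> A0 \<Longrightarrow> b \<in> A1" using clo[OF _ s1] abV by (auto simp: A0_def A1_def)
      have i2: "b \<in> A0 \<Longrightarrow> a \<in> A1" using clo[OF _ s2] abV by (auto simp: A0_def A1_def)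
      have "real (card {x\<in>A0. x \<in> e}) \<le> real (card {x\<in>A1. x \<in> e})"
        unfolding c0 c1 using i1 i2 disj[of a] disj[of b] by auto
      then show ?thesis using 1 by (simp add: mult_left_mono)
    next
      case 2
      then have ty: "e \<notin> F" "0 < y e" using y01 eE unfolding r_def by (auto split: if_splits)
      have s1: "stp (a,True) (b,False) e" using ty eE ab by (auto simp: stp_def)
      have s2: "stp (b,True) (a,False) e" using ty eE ab eba by (auto simp: stp_def)
      have i1: "a \<in> A1 \<Longrightarrow> b \<in> A0" using clo[OF _ s1] abV by (auto simp: A0_def A1_def)
      have i2: "b \<in> A1 \<Longrightarrow> a \<in> A0" using clo[OF _ s2] abV by (auto simp: A0_def A1_def)
      have "real (card {x\<in>A1. x \<in> e}) \<le> real (card {x\<in>A0. x \<in> e})"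
        unfolding c0 c1 using i1 i2 disj[of a] disj[of b] by auto
      then show ?thesis using 2 by (simp add: mult_left_mono_neg)
    next
      case 3 then show ?thesis by simp
    qed
  qed
  have "(\<Sum>x\<in>A0. ex x) = (\<Sum>e\<in>E. r e * real (card {x\<in>A0. x \<in> e}))"
    unfolding ex_def by (rule sum_swap_ex[OF finA(1)])
  also have "\<dots> \<le> (\<Sum>e\<in>E. r e * real (card {x\<in>A1. x \<in> e}))"
    using edge by (rule sum_mono)
  also have "\<dots> = (\<Sum>x\<in>A1. ex x)"
    unfolding ex_def by (rule sum_swap_ex[OF finA(2), symmetric])
  finally show False using S0 S1 by linarith
qed

end


lemma bad_nonneg: "bad L x d \<ge> 0" by (simp add: bad_def)

lemma bad_zero: "bad L x d = 0 \<Longrightarrow> L x \<le> d \<and> d \<le> L x + 1"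
  by (simp add: bad_def max_def split: if_splits)

lemma bad_compl: "bad (\<lambda>z. D z - L z - 1) x (D x - d) = bad L x d"
  by (simp add: bad_def max_def)

lemma ysum_compl:
  assumes "finite E"
  shows "ysum E (\<lambda>e. 1 - y e) x = real (degree E x) - ysum E y x"
  unfolding ysum_def using degree_E_sum[OF assms, of x] by (simp add: sum_subtractf)

lemma int_degree_diff:
  assumes "finite E" "F \<subseteq> E"
  shows "int (degree (E - F) x) = int (degree E x) - int (degree F x)"
  using degree_diff[OF assms] by simp

lemma improve_any:
  assumes finE: "finite E"
    and edges: "\<forall>e\<in>E. \<exists>a b. a \<noteq> b \<and> e = {a, b}"
    and FE: "F \<subseteq> E"
    and y01: "\<forall>e\<in>E. 0 \<le> y e \<and> y e \<le> 1"
    and Lb: "\<forall>x. real_of_int (L x) \<le> ysum E y x \<and> ysum E y x \<le> real_of_int (L x) + 1"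
    and pos: "bad L v (int (degree F v)) > 0"
  shows "\<exists>G\<subseteq>E. (\<forall>x. bad L x (int (degree G x)) \<le> bad L x (int (degree F x)))
    \<and> bad L v (int (degree G v)) < bad L v (int (degree F v))"
proof (cases "L v + 2 \<le> int (degree F v)")
  case True
  interpret aug E F y L v by (unfold_locales; use assms True in auto)
  show ?thesis by (rule excess)
next
  case False
  then have low: "int (degree F v) + 1 \<le> L v" using pos bad_zero[of L v]
    by (simp add: bad_def max_def split: if_splits)
  define L' where "L' z = int (degree E z) - L z - 1" for z
  define y' where "y' e = 1 - y e" for e
  have FE': "E - F \<subseteq> E" by auto
  have y01': "\<forall>e\<in>E. 0 \<le> y' e \<and> y' e \<le> 1" using y01 by (auto simp: y'_def)
  have Lb': "\<forall>x. real_of_int (L' x) \<le> ysum E y' x \<and> ysum E y' x \<le> real_of_int (L' x) + 1"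
  proof
    fix x
    have "ysum E y' x = real (degree E x) - ysum E y x"
      unfolding y'_def by (rule ysum_compl[OF finE])
    then show "real_of_int (L' x) \<le> ysum E y' x \<and> ysum E y' x \<le> real_of_int (L' x) + 1"
      using Lb[rule_format, of x] unfolding L'_def by simp
  qed
  have exc': "L' v + 2 \<le> int (degree (E - F) v)"
    using low int_degree_diff[OF finE FE, of v] unfolding L'_def by simp
  interpret aug E "E - F" y' L' v by (unfold_locales; use finE edges FE' y01' Lb' exc' FE in auto)
  obtain G' where G'E: "G' \<subseteq> E"
    and A: "\<forall>x. bad L' x (int (degree G' x)) \<le> bad L' x (int (degree (E - F) x))"
    and B: "bad L' v (int (degree G' v)) < bad L' v (int (degree (E - F) v))"
    using excess by blast
  have tr: "bad L' x (int (degree H x)) = bad L x (int (degree (E - H) x))" if "H \<subseteq> E" for H x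
  proof -
    have "int (degree H x) = int (degree E x) - int (degree (E - H) x)"
      using int_degree_diff[OF finE that, of x] by simp
    then show ?thesis unfolding L'_def using bad_compl[of "\<lambda>z. int (degree E z)" L x "int (degree (E - H) x)"]
      by simp
  qed
  have EEF: "E - (E - F) = F" using assms(3) by auto
  have "\<forall>x. bad L x (int (degree (E - G') x)) \<le> bad L x (int (degree F x))"
    using A tr[OF G'E] tr[OF FE'] EEF by simp
  moreover have "bad L v (int (degree (E - G') v)) < bad L v (int (degree F v))"
    using B tr[OF G'E] tr[OF FE'] EEF by simp
  ultimately show ?thesis by (intro exI[of _ "E - G'"]) auto
qed

lemma rounding:
  assumes finE: "finite E"
    and edges: "\<forall>e\<in>E. \<exists>a b. a \<noteq> b \<and> e = {a, b}"
    and y01: "\<forall>e\<in>E. 0 \<le> y e \<and> y e \<le> 1"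
    and Lb: "\<forall>x. real_of_int (L x) \<le> ysum E y x \<and> ysum E y x \<le> real_of_int (L x) + 1"
  shows "\<exists>F\<subseteq>E. \<forall>x. L x \<le> int (degree F x) \<and> int (degree F x) \<le> L x + 1"
proof -
  define VV where "VV = \<Union>E"
  have "\<forall>e\<in>E. finite e" using edges by fastforce
  then have finVV: "finite VV" unfolding VV_def using finE by blast
  define D where "D F = (\<Sum>x\<in>VV. bad L x (int (degree F x)))" for F
  obtain F where FE: "F \<subseteq> E" and mn: "\<forall>G. G \<subseteq> E \<longrightarrow> nat (D F) \<le> nat (D G)"
    using ex_has_least_nat[of "\<lambda>F. F \<subseteq> E" "{}" "\<lambda>F. nat (D F)"] by blast
  have out: "degree G x = 0" if "x \<notin> VV" "G \<subseteq> E" for x G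
  proof -
    have "{e\<in>G. x \<in> e} = {}" using that unfolding VV_def by auto
    then show ?thesis unfolding degree_def by (metis card.empty)
  qed
  have outL: "L x \<le> 0 \<and> 0 \<le> L x + 1" if "x \<notin> VV" for x
  proof -
    have "{e\<in>E. x \<in> e} = {}" using that unfolding VV_def by auto
    then have "ysum E y x = 0" unfolding ysum_def by (metis sum.empty)
    then show ?thesis using Lb[rule_format, of x] by simp
  qed
  have good: "bad L x (int (degree F x)) = 0" for x
  proof (rule ccontr)
    assume "bad L x (int (degree F x)) \<noteq> 0"
    then have pos: "bad L x (int (degree F x)) > 0" using bad_nonneg[of L x "int (degree F x)"] by linarith
    have xV: "x \<in> VV"
    proof (rule ccontr)
      assume "x \<notin> VV"
      then have "degree F x = 0" "L x \<le> 0 \<and> 0 \<le> L x + 1" using out[OF _ FE] outL by auto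
      then have "bad L x (int (degree F x)) = 0"
        by (simp add: bad_def max_def)
      then show False using pos by simp
    qed
    obtain G where GE: "G \<subseteq> E" and A: "\<forall>z. bad L z (int (degree G z)) \<le> bad L z (int (degree F z))"
      and B: "bad L x (int (degree G x)) < bad L x (int (degree F x))"
      using improve_any[OF finE edges FE y01 Lb pos] by blast
    have "D G < D F" unfolding D_def
      by (rule sum_strict_mono_ex1[OF finVV]) (use A B xV in blast)+
    moreover have "D G \<ge> 0" unfolding D_def by (auto intro: sum_nonneg simp: bad_nonneg)
    ultimately have "nat (D G) < nat (D F)" by simp
    moreover have "nat (D F) \<le> nat (D G)" using mn GE by blast
    ultimately show False by linarith
  qed
  have "\<forall>x. L x \<le> int (degree F x) \<and> int (degree F x) \<le> L x + 1"
    using bad_zero[OF good] by blast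
  with FE show ?thesis by blast
qed



lemma sg_conj: "simple_graph V E \<Longrightarrow> e \<in> E \<Longrightarrow> \<exists>u v. u \<in> V \<and> v \<in> V \<and> u \<noteq> v \<and> e = {u, v}"
  unfolding simple_graph_def by (elim conjE) (rule bspec)

lemma sg_finV: "simple_graph V E \<Longrightarrow> finite V"
  unfolding simple_graph_def by (rule conjunct1)

lemma sg_edges: "simple_graph V E \<Longrightarrow> \<forall>e\<in>E. \<exists>a b. a \<noteq> b \<and> e = {a, b}"
proof
  fix e assume sg: "simple_graph V E" and "e \<in> E"
  from sg_conj[OF this] obtain u v where "u \<in> V \<and> v \<in> V \<and> u \<noteq> v \<and> e = {u, v}" by (elim exE)
  then show "\<exists>a b. a \<noteq> b \<and> e = {a, b}" by (intro exI[of _ u] exI[of _ v]) (elim conjE, intro conjI)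
qed

lemma sg_sub: "simple_graph V E \<Longrightarrow> e \<in> E \<Longrightarrow> e \<subseteq> V"
proof -
  assume sg: "simple_graph V E" and "e \<in> E"
  from sg_conj[OF this] obtain u v where "u \<in> V \<and> v \<in> V \<and> u \<noteq> v \<and> e = {u, v}" by (elim exE)
  then show "e \<subseteq> V" by (elim conjE) simp
qed

lemma sg_finite: "simple_graph V E \<Longrightarrow> finite E"
proof -
  assume sg: "simple_graph V E"
  have "E \<subseteq> Pow V" using sg_sub[OF sg] by (intro subsetI) simp
  moreover have "finite V" by (rule sg_finV[OF sg])
  ultimately show ?thesis by (meson finite_Pow_iff finite_subset)
qed

lemma count_bound:
  fixes f g :: "'a \<Rightarrow> nat"
  assumes "inj_on f V" "T > 0"
    and "\<forall>v\<in>V. f v div T \<le> g v \<and> g v \<le> f v div T + 1"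
  shows "card {v\<in>V. g v = k} \<le> 2 * T"
proof -
  have sub: "f ` {v\<in>V. g v = k} \<subseteq> {T * (k - 1) ..< T * (k + 1)}"
  proof
    fix n assume "n \<in> f ` {v\<in>V. g v = k}"
    then obtain v where v: "v \<in> V" "g v = k" "n = f v" by auto
    have a: "f v div T \<le> k" "k \<le> f v div T + 1" using assms(3) v by auto
    have "f v div T < k + 1" using a(1) by simp
    then have "f v < (k + 1) * T" using div_less_iff_less_mult[OF assms(2)] by blast
    then have "f v < T * (k + 1)" by (simp add: mult.commute)
    moreover have "T * (k - 1) \<le> f v"
    proof -
      have "k - 1 \<le> f v div T" using a(2) by linarith
      then have "T * (k - 1) \<le> T * (f v div T)" by simp
      also have "\<dots> \<le> f v" by (simp add: mult.commute)
      finally show ?thesis .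
    qed
    ultimately show "n \<in> {T * (k - 1) ..< T * (k + 1)}" using v by auto
  qed
  have "card {v\<in>V. g v = k} = card (f ` {v\<in>V. g v = k})"
    using assms(1) by (simp add: card_image inj_on_subset)
  also have "\<dots> \<le> card {T * (k - 1) ..< T * (k + 1)}" using card_mono[OF finite_atLeastLessThan sub] .
  also have "\<dots> = T * (k + 1) - T * (k - 1)" by simp
  also have "\<dots> \<le> 2 * T" by (cases k) (auto simp: algebra_simps)
  finally show ?thesis .
qed

lemma max_mult_le:
  assumes "finite V" "\<forall>k. mult_deg V F k \<le> B"
  shows "max_mult V F \<le> B"
proof -
  have "range (mult_deg V F) \<subseteq> {..card V}"
    unfolding mult_deg_def using assms(1) by (auto intro: card_mono)
  then have "finite (range (mult_deg V F))" using finite_subset by blast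
  then show ?thesis unfolding max_mult_def using assms(2) by auto
qed

definition sig :: "'a set set \<Rightarrow> ('a set \<Rightarrow> nat) \<Rightarrow> 'a \<Rightarrow> nat" where
  "sig E w v = (\<Sum>e\<in>{e \<in> E. v \<in> e}. w e)"

lemma round_weights:
  fixes E :: "'a set set" and a :: "'a set \<Rightarrow> nat" and T :: nat
  assumes sg: "simple_graph V E" and T: "T > 0" and aT: "\<forall>e\<in>E. a e \<le> T"
  shows "\<exists>F\<subseteq>E. \<forall>v. sig E a v div T \<le> degree F v \<and> degree F v \<le> sig E a v div T + 1"
proof -
  have finE: "finite E" by (rule sg_finite[OF sg])
  define y where "y e = real (a e) / real T" for e
  define L where "L x = \<lfloor>ysum E y x\<rfloor>" for x
  have ys: "ysum E y x = real (sig E a x) / real T" for x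
    unfolding ysum_def y_def sig_def by (simp add: sum_divide_distrib)
  have L: "L x = int (sig E a x div T)" for x
    unfolding L_def ys using floor_divide_of_nat_eq[where 'a=real, of "sig E a x" T] by simp
  have y01: "\<forall>e\<in>E. 0 \<le> y e \<and> y e \<le> 1" using aT T by (auto simp: y_def)
  have Lb: "\<forall>x. real_of_int (L x) \<le> ysum E y x \<and> ysum E y x \<le> real_of_int (L x) + 1"
  proof
    fix x
    have "real_of_int \<lfloor>ysum E y x\<rfloor> \<le> ysum E y x" by (rule of_int_floor_le)
    moreover have "ysum E y x < real_of_int \<lfloor>ysum E y x\<rfloor> + 1" by (rule real_of_int_floor_add_one_gt)
    ultimately show "real_of_int (L x) \<le> ysum E y x \<and> ysum E y x \<le> real_of_int (L x) + 1"
      unfolding L_def by linarith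
  qed
  obtain F where FE: "F \<subseteq> E" and b: "\<forall>x. L x \<le> int (degree F x) \<and> int (degree F x) \<le> L x + 1"
    using rounding[OF finE sg_edges[OF sg] y01 Lb] by blast
  have "\<forall>v. sig E a v div T \<le> degree F v \<and> degree F v \<le> sig E a v div T + 1"
  proof
    fix v
    have "int (sig E a v div T) \<le> int (degree F v) \<and> int (degree F v) \<le> int (sig E a v div T) + 1"
      using b[rule_format, of v] unfolding L .
    then show "sig E a v div T \<le> degree F v \<and> degree F v \<le> sig E a v div T + 1" by linarith
  qed
  with FE show ?thesis by blast
qed



lemma weighting_exists:
  assumes sg: "simple_graph V E"
    and iso: "card {v. isolated_vertex V E v} \<le> 1"
    and noie: "\<not> has_isolated_edge E"
  shows "\<exists>s w. 1 \<le> s \<and> irregular_weighting V E s w"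
proof -
  have finE: "finite E" by (rule sg_finite[OF sg])
  have finV: "finite V" by (rule sg_finV[OF sg])
  obtain f n where fn: "f ` E = {i::nat. i < n}" "inj_on f E"
    using finite_imp_inj_to_nat_seg[OF finE] by blast
  define w where "w e = (2::nat) ^ f e" for e
  have wr: "\<forall>e\<in>E. w e \<in> {1..2^n}"
  proof
    fix e assume "e \<in> E"
    then have "f e < n" using fn(1) by blast
    then have "(2::nat) ^ f e \<le> 2 ^ n" by (simp add: power_increasing)
    then show "w e \<in> {1..2^n}" by (simp add: w_def)
  qed
  define N where "N v = {e \<in> E. v \<in> e}" for v
  have sN: "(\<Sum>e\<in>N v. w e) = set_encode (f ` N v)" for v
  proof -
    have "inj_on f (N v)" using fn(2) by (rule inj_on_subset) (auto simp: N_def)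
    then show ?thesis unfolding set_encode_def w_def by (simp add: sum.reindex comp_def)
  qed
  have finN: "finite (N v)" for v using finE by (simp add: N_def)
  have inj: "inj_on (\<lambda>v. \<Sum>e\<in>{e \<in> E. v \<in> e}. w e) V"
  proof (rule inj_onI)
    fix u v assume uV: "u \<in> V" and vV: "v \<in> V"
      and eq: "(\<Sum>e\<in>{e \<in> E. u \<in> e}. w e) = (\<Sum>e\<in>{e \<in> E. v \<in> e}. w e)"
    have "set_encode (f ` N u) = set_encode (f ` N v)" using eq sN unfolding N_def by metis
    then have "f ` N u = f ` N v" using finN by (simp add: set_encode_eq)
    then have NN: "N u = N v" using inj_on_image_eq_iff[OF fn(2)] by (auto simp: N_def)
    show "u = v"
    proof (rule ccontr)
      assume uv: "u \<noteq> v"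
      show False
      proof (cases "N u = {}")
        case True
        then have "N v = {}" using NN by simp
        have "{e \<in> E. u \<in> e} = {}" "{e \<in> E. v \<in> e} = {}" using True \<open>N v = {}\<close> by (simp_all only: N_def)
        then have "isolated_vertex V E u" "isolated_vertex V E v"
          using uV vV unfolding isolated_vertex_def degree_def by (simp_all only: card.empty) 
        then have "{u,v} \<subseteq> {v. isolated_vertex V E v}" by auto
        moreover have "finite {v. isolated_vertex V E v}"
          using finV by (rule finite_subset[rotated]) (auto simp: isolated_vertex_def)
        ultimately have "card {u,v} \<le> card {v. isolated_vertex V E v}" by (rule card_mono[rotated])
        then show False using iso uv by simp
      next
        case False
        then obtain e where eN: "e \<in> N u" by blast
        then have eE: "e \<in> E" "u \<in> e" "v \<in> e" using NN by (auto simp: N_def)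
        obtain a b where ab: "a \<noteq> b" "e = {a,b}" using sg_edges[OF sg] eE(1) by blast
        have euv: "e = {u,v}" using ab eE uv by auto
        have Nu: "N u = {{u,v}}"
        proof
          show "{{u,v}} \<subseteq> N u" using eN euv by simp
          show "N u \<subseteq> {{u,v}}"
          proof
            fix e' assume e': "e' \<in> N u"
            then have "e' \<in> E" "u \<in> e'" "v \<in> e'" using NN by (auto simp: N_def)
            moreover obtain a' b' where "a' \<noteq> b'" "e' = {a',b'}" using sg_edges[OF sg] \<open>e' \<in> E\<close> by blast
            ultimately have "e' = {u,v}" using uv by auto
            then show "e' \<in> {{u,v}}" by simp
          qed
        qed
        have "degree E u = 1" "degree E v = 1" using Nu NN unfolding degree_def N_def by simp_all
        moreover have "{u,v} \<in> E" using eE euv by simp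
        ultimately have "has_isolated_edge E" using uv unfolding has_isolated_edge_def by blast
        then show False using noie by simp
      qed
    qed
  qed
  have "1 \<le> (2::nat) ^ n" by simp
  then show ?thesis using wr inj unfolding irregular_weighting_def by blast
qed

lemma strength:
  assumes sg: "simple_graph V E"
    and iso: "card {v. isolated_vertex V E v} \<le> 1"
    and noie: "\<not> has_isolated_edge E"
  shows "1 \<le> irreg_strength V E \<and> (\<exists>w. irregular_weighting V E (irreg_strength V E) w)"
proof -
  obtain s w where "1 \<le> s \<and> irregular_weighting V E s w" using weighting_exists[OF assms] by blast
  then have "\<exists>s. 1 \<le> s \<and> (\<exists>w. irregular_weighting V E s w)" by blast
  then show ?thesis unfolding irreg_strength_def by (rule LeastI_ex)
qed



lemma sig_sub1:
  assumes "finite E" "\<forall>e\<in>E. 1 \<le> w e"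
  shows "sig E (\<lambda>e. w e - 1) v + degree E v = sig E w v"
proof -
  have "(\<Sum>e\<in>{e\<in>E. v \<in> e}. (w e - 1) + 1) = (\<Sum>e\<in>{e\<in>E. v \<in> e}. w e - 1) + (\<Sum>e\<in>{e\<in>E. v \<in> e}. 1)"
    by (rule sum.distrib)
  then have "sig E (\<lambda>e. w e - 1) v + degree E v = (\<Sum>e\<in>{e\<in>E. v \<in> e}. (w e - 1) + 1)"
    unfolding sig_def degree_def by simp
  also have "\<dots> = (\<Sum>e\<in>{e\<in>E. v \<in> e}. w e)" using assms(2) by (intro sum.cong) auto
  finally show ?thesis by (simp add: sig_def)
qed

theorem theorem1p8:
  fixes V :: "'a set" and E :: "'a set set"
  assumes "simple_graph V E"
    and "card {v. isolated_vertex V E v} \<le> 1"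
    and "\<not> has_isolated_edge E"
  shows "(\<exists>F\<subseteq>E. max_mult V F \<le> 2 * irreg_strength V E)
    \<and> (regular V E \<and> E \<noteq> {} \<longrightarrow>
         (\<exists>F\<subseteq>E. int (max_mult V F) \<le> 2 * int (irreg_strength V E) - 2))"
proof -
  note sg = assms(1)
  define s where "s = irreg_strength V E"
  have finE: "finite E" by (rule sg_finite[OF sg])
  have finV: "finite V" by (rule sg_finV[OF sg])
  obtain w where s1: "1 \<le> s" and iw: "irregular_weighting V E s w"
    using strength[OF assms] unfolding s_def by blast
  have wr: "\<forall>e\<in>E. w e \<in> {1..s}" and inj: "inj_on (sig E w) V"
    using iw unfolding irregular_weighting_def sig_def by auto
  have part1: "\<exists>F\<subseteq>E. max_mult V F \<le> 2 * s"
  proof -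
    obtain F where FE: "F \<subseteq> E"
      and b: "\<forall>v. sig E w v div s \<le> degree F v \<and> degree F v \<le> sig E w v div s + 1"
      using round_weights[OF sg, of s w] s1 wr by auto
    have "\<forall>k. mult_deg V F k \<le> 2 * s"
    proof
      fix k
      show "mult_deg V F k \<le> 2 * s" unfolding mult_deg_def
        by (rule count_bound[OF inj]) (use s1 b in auto)
    qed
    then show ?thesis using FE max_mult_le[OF finV] by blast
  qed
  have part2: "\<exists>F\<subseteq>E. int (max_mult V F) \<le> 2 * int s - 2" if reg: "regular V E" and ne: "E \<noteq> {}"
  proof -
    obtain d where dd: "\<forall>v\<in>V. degree E v = d" using reg unfolding regular_def by blast
    obtain e where eE: "e \<in> E" using ne by blast
    obtain a b where ab: "a \<in> V \<and> b \<in> V \<and> a \<noteq> b \<and> e = {a, b}" using sg_conj[OF sg eE] by (elim exE)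
    have s2: "2 \<le> s"
    proof (rule ccontr)
      assume "\<not> 2 \<le> s"
      then have "s = 1" using s1 by simp
      then have w1: "\<forall>e\<in>E. w e = 1" using wr by auto
      have "sig E w v = degree E v" for v
        unfolding sig_def degree_def using w1 by simp
      then have "sig E w a = sig E w b" using dd ab by simp
      then show False using inj ab by (meson inj_on_def)
    qed
    define a' where "a' e = w e - 1" for e
    have w1: "\<forall>e\<in>E. 1 \<le> w e" using wr by auto
    have sa: "sig E a' v + degree E v = sig E w v" for v
      unfolding a'_def by (rule sig_sub1[OF finE w1])
    have inj': "inj_on (sig E a') V"
    proof (rule inj_onI)
      fix u v assume "u \<in> V" "v \<in> V" "sig E a' u = sig E a' v"
      then have "sig E w u = sig E w v" using sa[of u] sa[of v] dd by simp
      then show "u = v" using inj \<open>u \<in> V\<close> \<open>v \<in> V\<close> by (meson inj_on_def)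
    qed
    have aT: "\<forall>e\<in>E. a' e \<le> s - 1" using wr unfolding a'_def by (auto intro: diff_le_mono)
    obtain F where FE: "F \<subseteq> E"
      and b: "\<forall>v. sig E a' v div (s - 1) \<le> degree F v \<and> degree F v \<le> sig E a' v div (s - 1) + 1"
      using round_weights[OF sg, of "s - 1" a'] s2 aT by auto
    have "\<forall>k. mult_deg V F k \<le> 2 * (s - 1)"
    proof
      fix k
      show "mult_deg V F k \<le> 2 * (s - 1)" unfolding mult_deg_def
        by (rule count_bound[OF inj']) (use s2 b in auto)
    qed
    then have "max_mult V F \<le> 2 * (s - 1)" using max_mult_le[OF finV] by blast
    then have "int (max_mult V F) \<le> 2 * int s - 2" using s2 by linarith
    then show ?thesis using FE by blast
  qed
  show ?thesis using part1 part2 unfolding s_def by blast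
qed

end
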